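(* Let $(\varPhi,\overline{y})$ be a right normalized skew ruled surface in $\mathbb{E}^3$ with support function $q=\frac{f(u)+g(u)v}{w}$, neither $f$ nor $g$ the zero function. Then the following are equivalent: (a) $\overline{y}$ is a right normalization of the first type, i.e. the relative image $\varPhi^*=(U,\overline{y})$ degenerates into a curve; (b) $(\varPhi,\overline{y})$ is relatively minimal; (c) $g=\int\frac{\kappa f}{\delta}\,\mathrm{d}u+c$ for some $c\in\mathbb{R}$.
   Context: $\varPhi$ is a ruled $C^r$-surface ($r\ge3$) with nonvanishing Gaussian curvature, in standard parameters $\overline{x}(u,v)=\overline{s}(u)+v\,\overline{e}(u)$, $(u,v)\in U=I\times\mathbb{R}$, $|\overline{e}|=|\overline{e}'|=1$, $\langle\overline{s}',\overline{e}'\rangle=0$. Frame $\overline{n}=\overline{e}'$, $\overline{z}=\overline{e}\times\overline{n}$, $\overline{n}'=-\overline{e}+\kappa\overline{z}$, $\overline{z}'=-\kappa\overline{n}$. Invariants: $\delta=(\overline{s}',\overline{e},\overline{e}')\neq0$, $\kappa=(\overline{e},\overline{e}',\overline{e}'')$, $\lambda=\cot\sphericalangle(\overline{e},\overline{s}')$, $\overline{s}'=\delta\lambda\overline{e}+\delta\overline{z}$. $w=\sqrt{\delta^2+v^2}$, $\overline{\xi}=(\delta\overline{n}-v\overline{z})/w$. A relative normalization $\overline{y}$ is determined by its support function $q=\langle\overline{\xi},\overline{y}\rangle\neq0$; the right normalization with $q=(f+gv)/w$ ($f,g$ functions of $u$) is $\overline{y}=\frac{(\kappa f-\delta g')v+\delta'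 f-\delta f'-\delta^2\kappa g}{\delta^2}\overline{e}+\frac{f}{\delta}\overline{n}-g\overline{z}$. The relative shape operator is defined by $\overline{y}_{/i}=-B_i^j\overline{x}_{/j}$, the relative mean curvature is $H=\frac12(B_1^1+B_2^2)$, and $(\varPhi,\overline{y})$ is relatively minimal if $H\equiv0$. $\int\cdots\mathrm{d}u$ denotes an antiderivative. *)

theory Defs
  imports "HOL-Analysis.Analysis"
begin

definition Dv :: "(real \<Rightarrow> 'a::real_normed_vector) \<Rightarrow> real \<Rightarrow> 'a" where
  "Dv F t = vector_derivative F (at t)"

fun Ck_on :: "nat \<Rightarrow> (real \<Rightarrow> 'a::real_normed_vector) \<Rightarrow> real set \<Rightarrow> bool" where
  "Ck_on 0 F I = continuous_on I F"
| "Ck_on (Suc k) F I = ((\<forall>t\<in>I. F differentiable (at t)) \<and> Ck_on k (Dv F) I)"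

definition triple :: "real^3 \<Rightarrow> real^3 \<Rightarrow> real^3 \<Rightarrow> real" where
  "triple a b c = a \<bullet> cross3 b c"

definition rs_delta :: "(real \<Rightarrow> real^3) \<Rightarrow> (real \<Rightarrow> real^3) \<Rightarrow> real \<Rightarrow> real" where
  "rs_delta s e u = triple (Dv s u) (e u) (Dv e u)"

definition rs_kappa :: "(real \<Rightarrow> real^3) \<Rightarrow> real \<Rightarrow> real" where
  "rs_kappa e u = triple (e u) (Dv e u) (Dv (Dv e) u)"

definition rs_n :: "(real \<Rightarrow> real^3) \<Rightarrow> real \<Rightarrow> real^3" where
  "rs_n e u = Dv e u"

definition rs_z :: "(real \<Rightarrow> real^3) \<Rightarrow> real \<Rightarrow> real^3" where
  "rs_z e u = cross3 (e u) (Dv e u)"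

definition ruled_x :: "(real \<Rightarrow> real^3) \<Rightarrow> (real \<Rightarrow> real^3) \<Rightarrow> real \<Rightarrow> real \<Rightarrow> real^3" where
  "ruled_x s e u v = s u + v *\<^sub>R e u"

text \<open>The right normalization with support function q = (f + g v)/w.\<close>
definition right_norm ::
  "(real \<Rightarrow> real^3) \<Rightarrow> (real \<Rightarrow> real^3) \<Rightarrow> (real \<Rightarrow> real) \<Rightarrow> (real \<Rightarrow> real)
     \<Rightarrow> real \<Rightarrow> real \<Rightarrow> real^3" where
  "right_norm s e f g u v =
     (let \<delta> = rs_delta s e u; \<kappa> = rs_kappa e u in
       (((\<kappa> * f u - \<delta> * Dv g u) * v + Dv (rs_delta s e) u * f u - \<delta> * Dv f u
          - \<delta>^2 * \<kappa> * g u) / \<delta>^2) *\<^sub>R e u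
       + (f u / \<delta>) *\<^sub>R rs_n e u - g u *\<^sub>R rs_z e u)"

definition pd_u :: "(real \<Rightarrow> real \<Rightarrow> real^3) \<Rightarrow> real \<Rightarrow> real \<Rightarrow> real^3" where
  "pd_u F u v = vector_derivative (\<lambda>t. F t v) (at u)"

definition pd_v :: "(real \<Rightarrow> real \<Rightarrow> real^3) \<Rightarrow> real \<Rightarrow> real \<Rightarrow> real^3" where
  "pd_v F u v = vector_derivative (\<lambda>t. F u t) (at v)"

text \<open>B is the relative shape operator at (u,v):  y_/i = - B_i^j x_/j
  (index 1 = u, index 2 = v; B $ i $ j = B_i^j).\<close>
definition is_rel_shape_op ::
  "(real \<Rightarrow> real \<Rightarrow> real^3) \<Rightarrow> (real \<Rightarrow> real \<Rightarrow> real^3) \<Rightarrow> real \<Rightarrow> real \<Rightarrow> real^2^2 \<Rightarrow> bool" where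
  "is_rel_shape_op x y u v B \<longleftrightarrow>
     pd_u y u v = - (B$1$1 *\<^sub>R pd_u x u v + B$1$2 *\<^sub>R pd_v x u v) \<and>
     pd_v y u v = - (B$2$1 *\<^sub>R pd_u x u v + B$2$2 *\<^sub>R pd_v x u v)"

definition rel_mean_curv ::
  "(real \<Rightarrow> real \<Rightarrow> real^3) \<Rightarrow> (real \<Rightarrow> real \<Rightarrow> real^3) \<Rightarrow> real \<Rightarrow> real \<Rightarrow> real" where
  "rel_mean_curv x y u v = (let B = (THE B. is_rel_shape_op x y u v B) in (B$1$1 + B$2$2) / 2)"

definition relatively_minimal ::
  "(real \<Rightarrow> real \<Rightarrow> real^3) \<Rightarrow> (real \<Rightarrow> real \<Rightarrow> real^3) \<Rightarrow> (real \<times> real) set \<Rightarrow> bool" where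
  "relatively_minimal x y U \<longleftrightarrow> (\<forall>(u,v)\<in>U. rel_mean_curv x y u v = 0)"

definition degenerates_to_curve :: "(real \<Rightarrow> real \<Rightarrow> real^3) \<Rightarrow> (real \<times> real) set \<Rightarrow> bool" where
  "degenerates_to_curve y U \<longleftrightarrow> (\<forall>(u,v)\<in>U. dim (span {pd_u y u v, pd_v y u v}) \<le> 1)"

end

theory Submission
  imports Defs
begin

lemma Ck_Suc_imp: "Ck_on (Suc k) F I \<Longrightarrow> Ck_on k F I"
proof (induction k arbitrary: F)
  case 0
  then show ?case by (auto intro!: differentiable_imp_continuous_on
        simp: differentiable_on_def differentiable_at_withinI)
next
  case (Suc k)
  then show ?case by auto
qed

lemma Ck_le: "k \<le> m \<Longrightarrow> Ck_on m F I \<Longrightarrow> Ck_on k F I"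
proof (induction m)
  case 0 then show ?case by simp
next
  case (Suc m)
  then show ?case using Ck_Suc_imp le_Suc_eq by blast
qed

lemma Dv_vd: "F differentiable (at t) \<Longrightarrow> (F has_vector_derivative Dv F t) (at t)"
  unfolding Dv_def by (simp add: vector_derivative_works)

lemma Dv_rd: "(F::real\<Rightarrow>real) differentiable (at t) \<Longrightarrow> (F has_real_derivative Dv F t) (at t)"
  using Dv_vd has_real_derivative_iff_has_vector_derivative by blast

lemma bb_cross: "bounded_bilinear (cross3 :: real^3 \<Rightarrow> real^3 \<Rightarrow> real^3)"
  using bilinear_cross bilinear_conv_bounded_bilinear by blast

lemma vd_cross:
  assumes "(F has_vector_derivative F') (at x)" "(G has_vector_derivative G') (at x)"
  shows "((\<lambda>t. cross3 (F t) (G t)) has_vector_derivative (cross3 (F x) G' + cross3 F' (G x))) (at x)"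
  using bounded_bilinear.has_vector_derivative[OF bb_cross assms] .

lemma rd_inner:
  fixes F G :: "real \<Rightarrow> real^3"
  assumes "(F has_vector_derivative F') (at x)" "(G has_vector_derivative G') (at x)"
  shows "((\<lambda>t. F t \<bullet> G t) has_real_derivative (F x \<bullet> G' + F' \<bullet> G x)) (at x)"
  using bounded_bilinear.has_vector_derivative[OF bounded_bilinear_inner assms]
  by (simp add: has_real_derivative_iff_has_vector_derivative)

lemma diff_inner:
  fixes F G :: "real \<Rightarrow> real^3"
  shows "F differentiable (at x) \<Longrightarrow> G differentiable (at x) \<Longrightarrow> (\<lambda>t. F t \<bullet> G t) differentiable (at x)"
  using rd_inner[OF Dv_vd Dv_vd] by (meson differentiableI_vector has_real_derivative_iff_has_vector_derivative)

lemma diff_cross: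
  fixes F G :: "real \<Rightarrow> real^3"
  shows "F differentiable (at x) \<Longrightarrow> G differentiable (at x) \<Longrightarrow> (\<lambda>t. cross3 (F t) (G t)) differentiable (at x)"
  using vd_cross[OF Dv_vd Dv_vd] by (meson differentiableI_vector)

lemma diff_transform:
  fixes F G :: "real \<Rightarrow> 'a::real_normed_vector"
  assumes "F differentiable (at u)" "open I" "u \<in> I" "\<And>t. t \<in> I \<Longrightarrow> F t = G t"
  shows "G differentiable (at u)"
  using has_vector_derivative_transform_within_open[OF Dv_vd[OF assms(1)] assms(2,3,4)]
  by (rule differentiableI_vector)

lemma const_deriv0:
  assumes "open I" "u \<in> I" "(\<phi> has_real_derivative d) (at u)" "\<And>t. t \<in> I \<Longrightarrow> \<phi> t = c"
  shows "d = 0"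
proof -
  have "((\<lambda>_. c) has_real_derivative d) (at u)"
    using has_field_derivative_transform_within_open[OF assms(3,1,2)] assms(4) by auto
  then show ?thesis using DERIV_const DERIV_unique by blast
qed

lemma cross_cross_id: "cross3 (D::real^3) (cross3 a b) = (D \<bullet> b) *\<^sub>R a - (D \<bullet> a) *\<^sub>R b"
  by (simp add: cross3_simps forall_3)

lemma cross_cross_id2: "cross3 (z::real^3) (cross3 D z) = (z \<bullet> z) *\<^sub>R D - (z \<bullet> D) *\<^sub>R z"
  by (simp add: cross3_simps forall_3)

lemma lagrange: "cross3 (a::real^3) b \<bullet> cross3 c d = (a \<bullet> c) * (b \<bullet> d) - (a \<bullet> d) * (b \<bullet> c)"
  by (simp add: cross3_simps)

lemma triple_cyc: "cross3 (a::real^3) b \<bullet> c = a \<bullet> cross3 b c"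
  by (simp add: cross3_simps)

lemma triple_swap: "cross3 (a::real^3) c \<bullet> b = - (a \<bullet> cross3 b c)"
  by (simp add: cross3_simps)

lemma frame_eq:
  fixes D a b :: "real^3"
  assumes "a \<bullet> a = 1" "b \<bullet> b = 1" "a \<bullet> b = 0" "D \<bullet> a = 0" "D \<bullet> b = 0" "D \<bullet> cross3 a b = 0"
  shows "D = 0"
proof -
  let ?z = "cross3 a b"
  have zz: "?z \<bullet> ?z = 1" using lagrange[of a b a b] assms by (simp add: inner_commute)
  have "cross3 D ?z = 0" using cross_cross_id assms by simp
  then have "0 = (?z \<bullet> ?z) *\<^sub>R D - (?z \<bullet> D) *\<^sub>R ?z" using cross_cross_id2[of ?z D] by simp
  then show ?thesis using zz assms(6) by (simp add: inner_commute)
qed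


lemma Ck3_unfold:
  "Ck_on 3 F I \<Longrightarrow> t \<in> I \<Longrightarrow> F differentiable (at t) \<and> Dv F differentiable (at t) \<and> Dv (Dv F) differentiable (at t)"
  by (simp add: numeral_3_eq_3)

lemma Ck2_unfold:
  "Ck_on 2 F I \<Longrightarrow> t \<in> I \<Longrightarrow> F differentiable (at t) \<and> Dv F differentiable (at t)"
  by (simp add: numeral_2_eq_2)

lemma frame_facts:
  fixes e :: "real \<Rightarrow> real^3"
  assumes I: "open I" and e3: "Ck_on 3 e I" and std: "\<forall>u\<in>I. norm (e u) = 1 \<and> norm (Dv e u) = 1"
    and u: "u \<in> I"
  shows "e u \<bullet> e u = 1" "Dv e u \<bullet> Dv e u = 1" "e u \<bullet> Dv e u = 0" "Dv e u \<bullet> Dv (Dv e) u = 0"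
    "e u \<bullet> Dv (Dv e) u = -1"
proof -
  have n1: "\<And>t. t \<in> I \<Longrightarrow> e t \<bullet> e t = 1" "\<And>t. t \<in> I \<Longrightarrow> Dv e t \<bullet> Dv e t = 1"
    using std by (auto simp: norm_eq_1)
  then show "e u \<bullet> e u = 1" "Dv e u \<bullet> Dv e u = 1" using u by auto
  have ed: "\<And>t. t \<in> I \<Longrightarrow> (e has_vector_derivative Dv e t) (at t) \<and> (Dv e has_vector_derivative Dv (Dv e) t) (at t)"
    using Ck3_unfold[OF e3] Dv_vd by blast
  have o1: "e t \<bullet> Dv e t = 0" if t: "t \<in> I" for t
  proof -
    have "e t \<bullet> Dv e t + Dv e t \<bullet> e t = 0"
      using const_deriv0[OF I t rd_inner[OF conjunct1[OF ed[OF t]] conjunct1[OF ed[OF t]]] n1(1)] .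
    then show ?thesis by (simp add: inner_commute)
  qed
  then show "e u \<bullet> Dv e u = 0" using u by auto
  have "Dv e u \<bullet> Dv (Dv e) u + Dv (Dv e) u \<bullet> Dv e u = 0"
    using const_deriv0[OF I u rd_inner[OF conjunct2[OF ed[OF u]] conjunct2[OF ed[OF u]]] n1(2)] .
  then show "Dv e u \<bullet> Dv (Dv e) u = 0" by (simp add: inner_commute)
  have "e u \<bullet> Dv (Dv e) u + Dv e u \<bullet> Dv e u = 0"
    using const_deriv0[OF I u rd_inner[OF conjunct1[OF ed[OF u]] conjunct2[OF ed[OF u]]] o1] .
  then show "e u \<bullet> Dv (Dv e) u = -1" using n1(2)[OF u] by simp
qed


lemma delta_diff:
  fixes s e :: "real \<Rightarrow> real^3"
  assumes I: "open I" and s3: "Ck_on 3 s I" and e3: "Ck_on 3 e I" and u: "u \<in> I"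
  shows "rs_delta s e differentiable (at u)" "Dv (rs_delta s e) differentiable (at u)"
    "rs_kappa e differentiable (at u)"
proof -
  define D1 where "D1 t = Dv s t \<bullet> (cross3 (e t) (Dv (Dv e) t) + cross3 (Dv e t) (Dv e t))
      + Dv (Dv s) t \<bullet> cross3 (e t) (Dv e t)" for t
  have dd: "(rs_delta s e has_real_derivative D1 t) (at t)" if t: "t \<in> I" for t
  proof -
    have "((\<lambda>t. Dv s t \<bullet> cross3 (e t) (Dv e t)) has_real_derivative D1 t) (at t)"
      unfolding D1_def
      by (intro rd_inner vd_cross Dv_vd) (use Ck3_unfold[OF s3 t] Ck3_unfold[OF e3 t] in auto)
    then show ?thesis unfolding rs_delta_def triple_def .
  qed
  then show "rs_delta s e differentiable (at u)" using u
    by (meson differentiableI_vector has_real_derivative_iff_has_vector_derivative)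
  have eq: "D1 t = Dv (rs_delta s e) t" if "t \<in> I" for t
    using dd[OF that] unfolding Dv_def
    by (simp add: has_real_derivative_iff_has_vector_derivative vector_derivative_at)
  have "D1 differentiable (at u)"
    unfolding D1_def
    using Ck3_unfold[OF s3 u] Ck3_unfold[OF e3 u]
    by (intro differentiable_add diff_inner diff_cross) auto
  then show "Dv (rs_delta s e) differentiable (at u)"
    by (rule diff_transform[OF _ I u]) (use eq in auto)
  show "rs_kappa e differentiable (at u)"
    unfolding rs_kappa_def triple_def
    using Ck3_unfold[OF e3 u]
    by (intro diff_inner diff_cross) auto
qed


lemma alg1: "(d::real) \<noteq> 0 \<Longrightarrow> ((k*F - d*G')* v + D*F - d*F' - d^2*k*G)/d^2 + (F'*d - F*D)/(d*d) + G*k + ((d*G' - k*F)/d^2) * v = 0"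
  by (simp add: field_simps power2_eq_square)

lemma alg2: "(d::real) \<noteq> 0 \<Longrightarrow> F/d * k - G' + ((d*G' - k*F)/d^2)*d = 0"
  by (simp add: field_simps power2_eq_square) 

lemma pointwise:
  fixes s e :: "real \<Rightarrow> real^3" and f g :: "real \<Rightarrow> real"
  assumes I: "open I" and u: "u \<in> I" and s3: "Ck_on 3 s I" and e3: "Ck_on 3 e I"
    and f2: "Ck_on 2 f I" and g2: "Ck_on 2 g I"
    and std: "\<forall>u\<in>I. norm (e u) = 1 \<and> norm (Dv e u) = 1 \<and> Dv s u \<bullet> Dv e u = 0"
    and skew: "\<forall>u\<in>I. rs_delta s e u \<noteq> 0"
  defines "H \<equiv> (rs_delta s e u * Dv g u - rs_kappa e u * f u) / (rs_delta s e u)^2"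
  shows "\<exists>c. pd_u (right_norm s e f g) u v = - (H *\<^sub>R pd_u (ruled_x s e) u v + c *\<^sub>R e u)"
    "pd_v (right_norm s e f g) u v = (- H) *\<^sub>R e u"
    "pd_v (ruled_x s e) u v = e u"
    "pd_u (ruled_x s e) u v \<bullet> cross3 (e u) (Dv e u) = rs_delta s e u"
    "e u \<bullet> cross3 (e u) (Dv e u) = 0" "e u \<bullet> e u = 1"
proof -
  note ff = frame_facts[OF I e3 _ u]
  have std': "\<forall>u\<in>I. norm (e u) = 1 \<and> norm (Dv e u) = 1" using std by auto
  note ff = ff[OF std']
  define \<delta> where "\<delta> = rs_delta s e"
  define \<kappa> where "\<kappa> = rs_kappa e"
  have d0: "\<delta> u \<noteq> 0" using skew u \<delta>_def by auto
  define a where "a t = ((\<kappa> t * f t - \<delta> t * Dv g t) * v + Dv \<delta> t * f t - \<delta> t * Dv f t - \<delta> t^2 * \<kappa> t * g t) / \<delta> t^2" for t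
  define b where "b t = f t / \<delta> t" for t
  define e0 where "e0 = e u"
  define e1 where "e1 = Dv e u"
  define e2 where "e2 = Dv (Dv e) u"
  define z where "z = cross3 e0 e1"
  have yeq: "(\<lambda>t. right_norm s e f g t v) = (\<lambda>t. a t *\<^sub>R e t + b t *\<^sub>R Dv e t - g t *\<^sub>R cross3 (e t) (Dv e t))"
    by (simp add: right_norm_def Let_def rs_n_def rs_z_def a_def b_def fun_eq_iff \<delta>_def \<kappa>_def)
  note dd = delta_diff[OF I s3 e3 u]
  have fd: "f differentiable (at u)" "Dv f differentiable (at u)" using Ck2_unfold[OF f2 u] by auto
  have gd: "g differentiable (at u)" "Dv g differentiable (at u)" using Ck2_unfold[OF g2 u] by auto
  have ad: "a differentiable (at u)"
    unfolding a_def \<delta>_def \<kappa>_def using dd fd gd d0[unfolded \<delta>_def]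
    by (intro differentiable_divide differentiable_add differentiable_diff differentiable_mult
        differentiable_power differentiable_const) auto
  define a' where "a' = Dv a u"
  have ader: "(a has_real_derivative a') (at u)" unfolding a'_def using Dv_rd[OF ad] .
  define b' where "b' = (Dv f u * \<delta> u - f u * Dv \<delta> u) / (\<delta> u * \<delta> u)"
  have bder: "(b has_real_derivative b') (at u)"
    unfolding b_def b'_def
    using DERIV_divide[OF Dv_rd[OF fd(1)] Dv_rd[OF dd(1)]] d0 \<delta>_def by simp
  have gder: "(g has_real_derivative Dv g u) (at u)" using Dv_rd gd by blast
  have ev: "(e has_vector_derivative e1) (at u)" "(Dv e has_vector_derivative e2) (at u)"
    unfolding e1_def e2_def using Ck3_unfold[OF e3 u] Dv_vd by blast+
  define Y where "Y = (a u *\<^sub>R e1 + a' *\<^sub>R e0) + (b u *\<^sub>R e2 + b' *\<^sub>R e1)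
     - (g u *\<^sub>R (cross3 e0 e2 + cross3 e1 e1) + Dv g u *\<^sub>R z)"
  have "((\<lambda>t. a t *\<^sub>R e t + b t *\<^sub>R Dv e t - g t *\<^sub>R cross3 (e t) (Dv e t)) has_vector_derivative Y) (at u)"
    using has_vector_derivative_diff[OF has_vector_derivative_add[OF has_vector_derivative_scaleR[OF ader ev(1)]
        has_vector_derivative_scaleR[OF bder ev(2)]] has_vector_derivative_scaleR[OF gder vd_cross[OF ev(1) ev(2)]]]
    by (simp add: Y_def z_def e0_def e1_def)
  then have yu: "pd_u (right_norm s e f g) u v = Y"
    unfolding pd_u_def yeq by (rule vector_derivative_at)
  show "pd_v (ruled_x s e) u v = e u"
  proof -
    have "((\<lambda>t. s u + t *\<^sub>R e u) has_vector_derivative (0 + (v *\<^sub>R 0 + 1 *\<^sub>R e u))) (at v)"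
      by (rule has_vector_derivative_add[OF has_vector_derivative_const
          has_vector_derivative_scaleR[OF DERIV_ident has_vector_derivative_const]])
    then show ?thesis unfolding pd_v_def ruled_x_def using vector_derivative_at by fastforce
  qed
  define X where "X = Dv s u + (v *\<^sub>R e1 + 0 *\<^sub>R e0)"
  have "((\<lambda>t. s t + v *\<^sub>R e t) has_vector_derivative X) (at u)"
    unfolding X_def e0_def
    by (intro has_vector_derivative_add has_vector_derivative_scaleR Dv_vd DERIV_const ev)
      (use Ck3_unfold[OF s3 u] in auto)
  then have xu: "pd_u (ruled_x s e) u v = X"
    unfolding pd_u_def ruled_x_def by (rule vector_derivative_at)
  have Xz: "X \<bullet> z = \<delta> u"
    by (simp add: X_def z_def \<delta>_def rs_delta_def triple_def inner_add_left dot_cross_self e0_def e1_def)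
  then show "pd_u (ruled_x s e) u v \<bullet> cross3 (e u) (Dv e u) = rs_delta s e u"
    using xu z_def e0_def e1_def \<delta>_def by simp
  show "e u \<bullet> cross3 (e u) (Dv e u) = 0" by (simp add: dot_cross_self)
  show "e u \<bullet> e u = 1" using ff by simp
  have Xe1: "X \<bullet> e1 = v"
    using std u ff by (simp add: X_def e1_def inner_add_left)
  have zz: "z \<bullet> z = 1" using lagrange[of e0 e1 e0 e1] ff by (simp add: z_def e0_def e1_def inner_commute)
  have e2z: "e2 \<bullet> z = \<kappa> u"
    using triple_cyc[of e0 e1 e2] by (simp add: z_def inner_commute \<kappa>_def rs_kappa_def triple_def e0_def e1_def e2_def)
  have c02z: "cross3 e0 e2 \<bullet> z = 0"
    using lagrange[of e0 e2 e0 e1] ff by (simp add: z_def e0_def e1_def e2_def inner_commute)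
  have c02e1: "cross3 e0 e2 \<bullet> e1 = - \<kappa> u"
    using triple_swap[of e0 e2 e1] by (simp add: \<kappa>_def rs_kappa_def triple_def e0_def e1_def e2_def)
  have e0z: "e0 \<bullet> z = 0" and e1z: "e1 \<bullet> z = 0" by (simp_all add: z_def dot_cross_self)
  have Yz: "Y \<bullet> z = b u * \<kappa> u - Dv g u"
    using zz e2z c02z e0z e1z by (simp add: Y_def inner_add_left inner_diff_left)
  have e2e1: "e2 \<bullet> e1 = 0" using ff by (simp add: e1_def e2_def inner_commute)
  have zne1: "z \<bullet> e1 = 0" using e1z by (simp add: inner_commute)
  have Ye1: "Y \<bullet> e1 = a u + b' + g u * \<kappa> u"
  proof -
    have "e1 \<bullet> e1 = 1" "e0 \<bullet> e1 = 0" using ff by (simp_all add: e0_def e1_def)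
    then show ?thesis
      using e2e1 zne1 c02e1 by (simp add: Y_def inner_add_left inner_diff_left)
  qed
  define c where "c = - (Y \<bullet> e0) - H * (X \<bullet> e0)"
  have "Y + (H *\<^sub>R X + c *\<^sub>R e0) = 0"
  proof (rule frame_eq[of e0 e1])
    show "e0 \<bullet> e0 = 1" "e1 \<bullet> e1 = 1" "e0 \<bullet> e1 = 0" using ff by (simp_all add: e0_def e1_def)
    show "(Y + (H *\<^sub>R X + c *\<^sub>R e0)) \<bullet> e0 = 0"
      using ff by (simp add: c_def inner_add_left e0_def)
    show "(Y + (H *\<^sub>R X + c *\<^sub>R e0)) \<bullet> e1 = 0"
      using ff Ye1 Xe1 alg1[OF d0, of "\<kappa> u" "f u" "Dv g u" v "Dv \<delta> u" "Dv f u" "g u"]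
    proof -
      have "a u + b' + g u * \<kappa> u + H * v = 0"
        unfolding a_def b'_def H_def \<delta>_def[symmetric] \<kappa>_def[symmetric] using alg1[OF d0] by simp
      moreover have "e0 \<bullet> e1 = 0" using ff by (simp add: e0_def e1_def)
      ultimately show ?thesis using Ye1 Xe1 by (simp add: inner_add_left algebra_simps)
    qed
    show "(Y + (H *\<^sub>R X + c *\<^sub>R e0)) \<bullet> cross3 e0 e1 = 0"
      using Yz Xz e0z alg2[OF d0, of "f u" "\<kappa> u" "Dv g u"]
      by (simp add: inner_add_left z_def b_def H_def \<delta>_def \<kappa>_def algebra_simps)
  qed
  show "\<exists>c. pd_u (right_norm s e f g) u v = - (H *\<^sub>R pd_u (ruled_x s e) u v + c *\<^sub>R e u)"
  proof (rule exI[of _ c])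
    show "pd_u (right_norm s e f g) u v = - (H *\<^sub>R pd_u (ruled_x s e) u v + c *\<^sub>R e u)"
    proof -
      have Yeq: "Y = - (H *\<^sub>R X + c *\<^sub>R e0)" using \<open>Y + (H *\<^sub>R X + c *\<^sub>R e0) = 0\<close>
        by (simp only: eq_neg_iff_add_eq_0)
      show ?thesis unfolding yu xu using Yeq by (simp only: e0_def)
    qed
  qed
  show "pd_v (right_norm s e f g) u v = (- H) *\<^sub>R e u"
  proof -
    define \<alpha> where "\<alpha> = \<kappa> u * f u - \<delta> u * Dv g u"
    define \<beta> where "\<beta> = Dv \<delta> u * f u - \<delta> u * Dv f u - \<delta> u^2 * \<kappa> u * g u"
    define K where "K = (f u / \<delta> u) *\<^sub>R rs_n e u - g u *\<^sub>R rs_z e u"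
    have req: "(\<lambda>t. right_norm s e f g u t) = (\<lambda>t. ((\<alpha> * t + \<beta>) / \<delta> u^2) *\<^sub>R e u + K)"
      by (simp add: right_norm_def Let_def fun_eq_iff \<alpha>_def \<beta>_def K_def \<delta>_def \<kappa>_def)
    have D: "((\<lambda>t. (\<alpha> * t + \<beta>) / \<delta> u^2) has_real_derivative \<alpha> / \<delta> u^2) (at v)"
      using d0 by (auto intro!: derivative_eq_intros simp: field_simps)
    have "((\<lambda>t. right_norm s e f g u t) has_vector_derivative
        (((\<alpha> * v + \<beta>) / \<delta> u^2) *\<^sub>R 0 + (\<alpha> / \<delta> u^2) *\<^sub>R e u) + 0) (at v)"
      unfolding req
      by (rule has_vector_derivative_add[OF has_vector_derivative_scaleR[OF D has_vector_derivative_const]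
          has_vector_derivative_const])
    then have "pd_v (right_norm s e f g) u v = (\<alpha> / \<delta> u^2) *\<^sub>R e u"
      unfolding pd_v_def by (simp add: vector_derivative_at)
    moreover have "\<alpha> / \<delta> u^2 = - H"
      using d0 unfolding \<alpha>_def H_def \<delta>_def \<kappa>_def by (simp add: field_simps)
    ultimately show ?thesis by simp
  qed
qed


lemma lin_unique:
  fixes xu e0 z :: "real^3"
  assumes "P *\<^sub>R xu + Q *\<^sub>R e0 = P' *\<^sub>R xu + Q' *\<^sub>R e0" "xu \<bullet> z = d" "d \<noteq> 0" "e0 \<bullet> z = 0" "e0 \<bullet> e0 = 1"
  shows "P = P' \<and> Q = Q'"
proof -
  have "(P *\<^sub>R xu + Q *\<^sub>R e0) \<bullet> z = (P' *\<^sub>R xu + Q' *\<^sub>R e0) \<bullet> z" using assms(1) by simp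
  then have "P * d = P' * d" using assms(2,4) by (simp add: inner_add_left)
  then have PP: "P = P'" using assms(3) by simp
  have "Q *\<^sub>R e0 = Q' *\<^sub>R e0" using assms(1) PP by simp
  moreover have "e0 \<noteq> 0" using assms(5) by auto
  ultimately have "Q = Q'" by simp
  with PP show ?thesis by simp
qed

lemma mean_and_degen:
  fixes s e :: "real \<Rightarrow> real^3" and f g :: "real \<Rightarrow> real"
  assumes I: "open I" and u: "u \<in> I" and s3: "Ck_on 3 s I" and e3: "Ck_on 3 e I"
    and f2: "Ck_on 2 f I" and g2: "Ck_on 2 g I"
    and std: "\<forall>u\<in>I. norm (e u) = 1 \<and> norm (Dv e u) = 1 \<and> Dv s u \<bullet> Dv e u = 0"
    and skew: "\<forall>u\<in>I. rs_delta s e u \<noteq> 0"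
  defines "H \<equiv> (rs_delta s e u * Dv g u - rs_kappa e u * f u) / (rs_delta s e u)^2"
  shows "rel_mean_curv (ruled_x s e) (right_norm s e f g) u v = H"
    "dim (span {pd_u (right_norm s e f g) u v, pd_v (right_norm s e f g) u v}) \<le> 1 \<longleftrightarrow> H = 0"
proof -
  note pw = pointwise[OF I u s3 e3 f2 g2 std skew, folded H_def]
  obtain c where c: "pd_u (right_norm s e f g) u v = - (H *\<^sub>R pd_u (ruled_x s e) u v + c *\<^sub>R e u)"
    using pw(1) by blast
  define xu where "xu = pd_u (ruled_x s e) u v"
  define z where "z = cross3 (e u) (Dv e u)"
  have d0: "rs_delta s e u \<noteq> 0" using skew u by auto
  define B :: "real^2^2" where "B = vector [vector [H, c], vector [0, H]]"
  have PB: "is_rel_shape_op (ruled_x s e) (right_norm s e f g) u v B"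
    unfolding is_rel_shape_op_def B_def using c pw(2,3) by simp
  have uniq: "B' = B" if "is_rel_shape_op (ruled_x s e) (right_norm s e f g) u v B'" for B'
  proof -
    have r1: "B$1$1 *\<^sub>R xu + B$1$2 *\<^sub>R e u = B'$1$1 *\<^sub>R xu + B'$1$2 *\<^sub>R e u"
      using PB that unfolding is_rel_shape_op_def xu_def pw(3) by (metis minus_equation_iff)
    have r2: "B$2$1 *\<^sub>R xu + B$2$2 *\<^sub>R e u = B'$2$1 *\<^sub>R xu + B'$2$2 *\<^sub>R e u"
      using PB that unfolding is_rel_shape_op_def xu_def pw(3) by (metis minus_equation_iff)
    note l1 = lin_unique[OF r1 _ d0, of z] and l2 = lin_unique[OF r2 _ d0, of z]
    have "B$1$1 = B'$1$1 \<and> B$1$2 = B'$1$2" "B$2$1 = B'$2$1 \<and> B$2$2 = B'$2$2"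
      using l1 l2 pw(4,5,6) by (simp_all add: xu_def z_def)
    then show ?thesis by (simp add: vec_eq_iff forall_2)
  qed
  have "(THE B. is_rel_shape_op (ruled_x s e) (right_norm s e f g) u v B) = B"
    using PB uniq by (rule the_equality)
  then show "rel_mean_curv (ruled_x s e) (right_norm s e f g) u v = H"
    unfolding rel_mean_curv_def by (simp add: B_def Let_def)
  define a where "a = pd_u (right_norm s e f g) u v"
  define b where "b = pd_v (right_norm s e f g) u v"
  show "dim (span {pd_u (right_norm s e f g) u v, pd_v (right_norm s e f g) u v}) \<le> 1 \<longleftrightarrow> H = 0"
    unfolding a_def[symmetric] b_def[symmetric]
  proof
    assume H0: "H = 0"
    then have "b = 0" using pw(2) b_def by simp
    then have "{a, b} = insert 0 {a}" by auto
    then show "dim (span {a, b}) \<le> 1" by simp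
  next
    assume dle: "dim (span {a, b}) \<le> 1"
    show "H = 0"
    proof (rule ccontr)
      assume H0: "H \<noteq> 0"
      have bz: "b \<bullet> z = 0" using pw(2,5) by (simp add: b_def z_def)
      have az: "a \<bullet> z = - H * rs_delta s e u"
        using c pw(4,5) by (simp add: a_def z_def inner_add_left inner_diff_left)
      have "b \<bullet> e u = - H" using pw(2,6) by (simp add: b_def)
      then have bn0: "b \<noteq> 0" using H0 by auto
      have azn: "a \<bullet> z \<noteq> 0" using az H0 d0 by simp
      have "a \<notin> span {b}"
      proof
        assume "a \<in> span {b}"
        then obtain k where "a = k *\<^sub>R b" by (auto simp: span_singleton)
        then show False using azn bz by simp
      qed
      moreover have "independent {b}" using bn0 by (intro independent_insertI) (auto simp: independent_empty)
      ultimately have ind: "independent {a, b}" by (rule independent_insertI)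
      have "a \<noteq> b" using azn bz by auto
      then have "dim {a, b} = 2" using dim_eq_card_independent[OF ind] by simp
      then show False using dle by simp
    qed
  qed
qed

theorem proposition3:
  fixes s e :: "real \<Rightarrow> real^3" and f g :: "real \<Rightarrow> real" and I :: "real set" and r :: nat
  assumes I: "open I" "is_interval I" "I \<noteq> {}"
    and r: "r \<ge> 3" "Ck_on r s I" "Ck_on r e I"
    and fg_smooth: "Ck_on 2 f I" "Ck_on 2 g I"
    and std: "\<forall>u\<in>I. norm (e u) = 1 \<and> norm (Dv e u) = 1 \<and> Dv s u \<bullet> Dv e u = 0"
    and skew: "\<forall>u\<in>I. rs_delta s e u \<noteq> 0"
    and f_nz: "\<exists>u\<in>I. f u \<noteq> 0"
    and g_nz: "\<exists>u\<in>I. g u \<noteq> 0"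
  shows "(degenerates_to_curve (right_norm s e f g) (I \<times> UNIV)
           \<longleftrightarrow> relatively_minimal (ruled_x s e) (right_norm s e f g) (I \<times> UNIV))
       \<and> (relatively_minimal (ruled_x s e) (right_norm s e f g) (I \<times> UNIV)
           \<longleftrightarrow> (\<exists>F c. (\<forall>u\<in>I. (F has_real_derivative (rs_kappa e u * f u / rs_delta s e u)) (at u))
                      \<and> (\<forall>u\<in>I. g u = F u + c)))"
proof -
  have s3: "Ck_on 3 s I" using Ck_le[OF r(1) r(2)] .
  have e3: "Ck_on 3 e I" using Ck_le[OF r(1) r(3)] .
  define H where "H u = (rs_delta s e u * Dv g u - rs_kappa e u * f u) / (rs_delta s e u)^2" for u
  have mc: "rel_mean_curv (ruled_x s e) (right_norm s e f g) u v = H u" if "u \<in> I" for u v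
    using mean_and_degen(1)[OF I(1) that s3 e3 fg_smooth std skew] H_def by simp
  have dg: "dim (span {pd_u (right_norm s e f g) u v, pd_v (right_norm s e f g) u v}) \<le> 1 \<longleftrightarrow> H u = 0"
    if "u \<in> I" for u v
    using mean_and_degen(2)[OF I(1) that s3 e3 fg_smooth std skew] H_def by simp
  have A: "degenerates_to_curve (right_norm s e f g) (I \<times> UNIV) \<longleftrightarrow> (\<forall>u\<in>I. H u = 0)"
    unfolding degenerates_to_curve_def using dg by fastforce
  have Bm: "relatively_minimal (ruled_x s e) (right_norm s e f g) (I \<times> UNIV) \<longleftrightarrow> (\<forall>u\<in>I. H u = 0)"
    unfolding relatively_minimal_def using mc by fastforce
  have Hz: "H u = 0 \<longleftrightarrow> Dv g u = rs_kappa e u * f u / rs_delta s e u" if "u \<in> I" for u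
  proof -
    have "rs_delta s e u \<noteq> 0" using skew that by auto
    then show ?thesis unfolding H_def by (auto simp: field_simps power2_eq_square)
  qed
  have gd: "(g has_real_derivative Dv g u) (at u)" if "u \<in> I" for u
    using Dv_rd Ck2_unfold[OF fg_smooth(2) that] by blast
  have C: "(\<forall>u\<in>I. H u = 0) \<longleftrightarrow> (\<exists>F c. (\<forall>u\<in>I. (F has_real_derivative (rs_kappa e u * f u / rs_delta s e u)) (at u))
                      \<and> (\<forall>u\<in>I. g u = F u + c))"
  proof
    assume h: "\<forall>u\<in>I. H u = 0"
    show "\<exists>F c. (\<forall>u\<in>I. (F has_real_derivative (rs_kappa e u * f u / rs_delta s e u)) (at u))
                      \<and> (\<forall>u\<in>I. g u = F u + c)"
    proof (intro exI conjI ballI)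
      fix u assume u: "u \<in> I"
      show "(g has_real_derivative (rs_kappa e u * f u / rs_delta s e u)) (at u)"
        using gd[OF u] Hz[OF u] h u by simp
      show "g u = g u + 0" by simp
    qed
  next
    assume "\<exists>F c. (\<forall>u\<in>I. (F has_real_derivative (rs_kappa e u * f u / rs_delta s e u)) (at u))
                      \<and> (\<forall>u\<in>I. g u = F u + c)"
    then obtain F c where F: "\<forall>u\<in>I. (F has_real_derivative (rs_kappa e u * f u / rs_delta s e u)) (at u)"
      and gF: "\<forall>u\<in>I. g u = F u + c" by blast
    show "\<forall>u\<in>I. H u = 0"
    proof
      fix u assume u: "u \<in> I"
      have "((\<lambda>t. F t + c) has_real_derivative (rs_kappa e u * f u / rs_delta s e u)) (at u)"
        using F u by (auto intro!: derivative_eq_intros)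
      then have "(g has_real_derivative (rs_kappa e u * f u / rs_delta s e u)) (at u)"
        by (rule has_field_derivative_transform_within_open[OF _ I(1) u]) (use gF in auto)
      then have "Dv g u = rs_kappa e u * f u / rs_delta s e u" using gd[OF u] DERIV_unique by blast
      then show "H u = 0" using Hz[OF u] by simp
    qed
  qed
  show ?thesis using A Bm C by blast
qed

end
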